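(* Let $\hat Q^\pi=\sum_{i=1}^n b^\pi_iK(\cdot,\omega_0^{(i)})$ with $\mathbf b^\pi=[\mathbf K+\lambda n\mathrm I-\gamma\mathbf C]^{-1}\mathbf r$ be the kernel TD estimator, let $\mathcal D^\pi=\hat Q^\pi-Q^\pi$, and let $\varepsilon_i=r(\omega_0^{(i)})+\gamma Q^\pi(\omega_1^{(i)})-Q^\pi(\omega_0^{(i)})$ be the Bellman residuals. Then $$\frac1n\sum_{i=1}^n\Big(\mathcal D^\pi(\omega_0^{(i)})^2-\gamma\,\mathcal D^\pi(\omega_0^{(i)})\mathcal D^\pi(\omega_1^{(i)})\Big)=\frac1n\sum_{i=1}^n\varepsilon_i\,\mathcal D^\pi(\omega_0^{(i)})-\lambda\langle\mathcal D^\pi,\hat Q^\pi\rangle_{\mathcal H}.$$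
   Context: Markov decision process $(\mathcal S,\mathcal A,P,r,\gamma)$ with compact convex $\mathcal S\subset\mathbb R^{d_s}$, $\mathcal A\subset\mathbb R^{d_a}$, transition density $P(\cdot\mid s,a)$, reward $r$, discount $\gamma\in[0,1]$; $\pi$ a fixed policy; $Q^\pi(s,a)=\mathbb E[\sum_{t\ge0}\gamma^tr(s_t,a_t)\mid s_0=s,a_0=a]$ along $a_t\sim\pi(\cdot\mid s_t)$, $s_{t+1}\sim P(\cdot\mid s_t,a_t)$; it satisfies $Q^\pi(s,a)=r(s,a)+\gamma\mathbb E_{s'\sim P(\cdot\mid s,a),a'\sim\pi(\cdot\mid s')}Q^\pi(s',a')$. $K$ is a symmetric positive definite kernel on $\mathcal S\times\mathcal A$ with $\max_\omega K(\omega,\omega)<\infty$, $\mathcal H$ its RKHS; standing assumption: $Q^\pi\in\mathcal H$ and $r\in\mathcal H$. $\lambda>0$. Data: i.i.d. for $i=1,\dots,n$: $s_0^{(i)}\sim\mu_0$, $a_0^{(i)}\sim\pi(\cdot\mid s_0^{(i)})$, $s_1^{(i)}\sim P(\cdot\mid s_0^{(i)},a_0^{(i)})$, $a_1^{(i)}\sim\pi(\cdot\mid s_1^{(i)})$; $\omega_j^{(i)}=(s_j^{(i)},a_j^{(i)})$. Matrices: $\mathbf K_{i,j}=K(\omega_0^{(i)},\omega_0^{(j)})$, $\mathbf C_{i,j}=K(\omega_1^{(i)},\omega_0^{(j)})$, $\mathbf r_i=r(\omega_0^{(i)})$ (with $\mathbf K+\lambda n\mathrm I-\gamma\mathbf C$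 invertible). *)

theory Defs
  imports "HOL-Analysis.Analysis"
begin

text \<open>RKHS in feature-map form: the RKHS H of the kernel K on the domain X is modelled
  as a real Hilbert space 'h with a feature map phi (phi w = K(.,w)) whose span is dense,
  K w w' = inner (phi w) (phi w'), and an element h of H is the function
  w \<mapsto> inner h (phi w) (reproducing property).\<close>

definition rkhs_eval :: "('z \<Rightarrow> 'h::real_inner) \<Rightarrow> 'h \<Rightarrow> 'z \<Rightarrow> real" where
  "rkhs_eval phi h w = inner h (phi w)"

definition is_rkhs_feature_map ::
  "'z set \<Rightarrow> ('z \<Rightarrow> 'z \<Rightarrow> real) \<Rightarrow> ('z \<Rightarrow> 'h::{real_inner,complete_space}) \<Rightarrow> bool" where
  "is_rkhs_feature_map X K phi \<longleftrightarrow>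
     (\<forall>w\<in>X. \<forall>w'\<in>X. K w w' = inner (phi w) (phi w')) \<and>
     closure (span (phi ` X)) = UNIV"

definition td_coeffs ::
  "('z \<Rightarrow> 'z \<Rightarrow> real) \<Rightarrow> real \<Rightarrow> real \<Rightarrow> ('n::finite \<Rightarrow> 'z) \<Rightarrow> ('n \<Rightarrow> 'z)
     \<Rightarrow> ('z \<Rightarrow> real) \<Rightarrow> real ^ 'n" where
  "td_coeffs K lam gam w0 w1 rf =
     (let Km = (\<chi> i j. K (w0 i) (w0 j));
          Cm = (\<chi> i j. K (w1 i) (w0 j));
          M  = Km + (lam * real CARD('n)) *\<^sub>R mat 1 - gam *\<^sub>R Cm;
          rv = (\<chi> i. rf (w0 i))
      in matrix_inv M *v rv)"

definition td_estimator ::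
  "('z \<Rightarrow> 'h::real_vector) \<Rightarrow> real ^ 'n::finite \<Rightarrow> ('n \<Rightarrow> 'z) \<Rightarrow> 'h" where
  "td_estimator phi b w0 = (\<Sum>i\<in>UNIV. (b $ i) *\<^sub>R phi (w0 i))"

end

theory Submission
  imports Defs
begin

theorem proposition2:
  fixes S :: "(real ^ 'ds) set" and A :: "(real ^ 'da) set"
    and K :: "((real ^ 'ds) \<times> (real ^ 'da)) \<Rightarrow> ((real ^ 'ds) \<times> (real ^ 'da)) \<Rightarrow> real"
    and phi :: "((real ^ 'ds) \<times> (real ^ 'da)) \<Rightarrow> 'h::{real_inner,complete_space}"
    and Q r :: 'h
    and gam lam :: real
    and w0 w1 :: "'n::finite \<Rightarrow> (real ^ 'ds) \<times> (real ^ 'da)"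
  assumes "compact S" "convex S" "compact A" "convex A"
    and feat: "is_rkhs_feature_map (S \<times> A) K phi"
    and "bounded ((\<lambda>w. K w w) ` (S \<times> A))"
    and "0 \<le> gam" "gam \<le> 1" "0 < lam"
    and "\<And>i. w0 i \<in> S \<times> A" "\<And>i. w1 i \<in> S \<times> A"
    and inv: "invertible ((\<chi> i j. K (w0 i) (w0 j)) + (lam * real CARD('n)) *\<^sub>R mat 1
                          - gam *\<^sub>R (\<chi> i j. K (w1 i) (w0 j)))"
  defines "Qhat \<equiv> td_estimator phi (td_coeffs K lam gam w0 w1 (rkhs_eval phi r)) w0"
    and "D \<equiv> td_estimator phi (td_coeffs K lam gam w0 w1 (rkhs_eval phi r)) w0 - Q"
    and "eps \<equiv> (\<lambda>i. rkhs_eval phi r (w0 i) + gam * rkhs_eval phi Q (w1 i) - rkhs_eval phi Q (w0 i))"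
  shows "(1 / real CARD('n)) * (\<Sum>i\<in>UNIV. (rkhs_eval phi D (w0 i))\<^sup>2
              - gam * rkhs_eval phi D (w0 i) * rkhs_eval phi D (w1 i))
         = (1 / real CARD('n)) * (\<Sum>i\<in>UNIV. eps i * rkhs_eval phi D (w0 i))
           - lam * inner D Qhat"
proof -
  define n where "n = real CARD('n)"
  have npos: "n > 0" unfolding n_def by simp
  define M where "M = (\<chi> i j. K (w0 i) (w0 j)) + (lam * real CARD('n)) *\<^sub>R mat 1
                          - gam *\<^sub>R (\<chi> i j. K (w1 i) (w0 j))"
  define rv where "rv = (\<chi> i. rkhs_eval phi r (w0 i))"
  define b where "b = td_coeffs K lam gam w0 w1 (rkhs_eval phi r)"
  have bdef: "b = matrix_inv M *v rv"
    unfolding b_def td_coeffs_def M_def rv_def Let_def by simp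
  have Mb: "M *v b = rv"
  proof -
    have "M ** matrix_inv M = mat 1 \<and> matrix_inv M ** M = mat 1"
      using inv unfolding M_def[symmetric] invertible_def matrix_inv_def by (rule someI_ex)
    thus ?thesis unfolding bdef by (simp add: matrix_vector_mul_assoc)
  qed
  have Kx: "K x y = inner (phi x) (phi y)" if "x \<in> S \<times> A" "y \<in> S \<times> A" for x y
    using feat that unfolding is_rkhs_feature_map_def by blast
  have Qh: "Qhat = (\<Sum>i\<in>UNIV. (b $ i) *\<^sub>R phi (w0 i))"
    unfolding Qhat_def b_def td_estimator_def by simp
  have evQ: "inner Qhat (phi w) = (\<Sum>i\<in>UNIV. b $ i * inner (phi (w0 i)) (phi w))" for w
    unfolding Qh by (simp add: inner_sum_left)
  have row: "(\<Sum>i\<in>UNIV. b $ i * K (w0 j) (w0 i)) + lam * n * b $ j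
      - gam * (\<Sum>i\<in>UNIV. b $ i * K (w1 j) (w0 i)) = rkhs_eval phi r (w0 j)" for j
  proof -
    have "(M *v b) $ j = rv $ j" using Mb by simp
    moreover have "(M *v b) $ j = (\<Sum>i\<in>UNIV. (K (w0 j) (w0 i) + (if j = i then lam * n else 0)
        - gam * K (w1 j) (w0 i)) * b $ i)"
      unfolding M_def n_def by (auto simp: matrix_vector_mult_def mat_def intro!: sum.cong)
    moreover have "(\<Sum>i\<in>UNIV. (K (w0 j) (w0 i) + (if j = i then lam * n else 0)
        - gam * K (w1 j) (w0 i)) * b $ i) = (\<Sum>i\<in>UNIV. b $ i * K (w0 j) (w0 i))
        + (\<Sum>i\<in>UNIV. (if j = i then lam * n * b $ i else 0))
        - gam * (\<Sum>i\<in>UNIV. b $ i * K (w1 j) (w0 i))"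
      (is "?L = _")
    proof -
      have "?L = (\<Sum>i\<in>UNIV. K (w0 j) (w0 i) * b $ i) + (\<Sum>i\<in>UNIV. (if j = i then lam * n else 0) * b $ i)
          - (\<Sum>i\<in>UNIV. gam * K (w1 j) (w0 i) * b $ i)"
        by (simp only: distrib_right left_diff_distrib sum.distrib sum_subtractf)
      moreover have "(\<Sum>i\<in>UNIV. (if j = i then lam * n else 0) * b $ i) = (\<Sum>i\<in>UNIV. (if j = i then lam * n * b $ i else 0))"
        by (rule sum.cong) auto
      moreover have "(\<Sum>i\<in>UNIV. gam * K (w1 j) (w0 i) * b $ i) = gam * (\<Sum>i\<in>UNIV. b $ i * K (w1 j) (w0 i))"
        by (simp add: sum_distrib_left mult_ac)
      moreover have "(\<Sum>i\<in>UNIV. K (w0 j) (w0 i) * b $ i) = (\<Sum>i\<in>UNIV. b $ i * K (w0 j) (w0 i))"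
        by (simp add: mult_ac)
      ultimately show ?thesis by simp
    qed
    ultimately show ?thesis unfolding rv_def by simp
  qed
  define e0 where "e0 j = rkhs_eval phi D (w0 j)" for j
  define e1 where "e1 j = rkhs_eval phi D (w1 j)" for j
  have key: "e0 j - gam * e1 j - eps j = - (lam * n) * b $ j" for j
  proof -
    have a: "inner Qhat (phi (w0 j)) = (\<Sum>i\<in>UNIV. b $ i * K (w0 j) (w0 i))"
      unfolding evQ using assms(10) by (simp add: Kx inner_commute)
    have c: "inner Qhat (phi (w1 j)) = (\<Sum>i\<in>UNIV. b $ i * K (w1 j) (w0 i))"
      unfolding evQ using assms(10,11) by (simp add: Kx inner_commute)
    have "e0 j = inner Qhat (phi (w0 j)) - inner Q (phi (w0 j))"
      unfolding e0_def rkhs_eval_def D_def Qhat_def by (simp add: inner_diff_left)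
    moreover have "e1 j = inner Qhat (phi (w1 j)) - inner Q (phi (w1 j))"
      unfolding e1_def rkhs_eval_def D_def Qhat_def by (simp add: inner_diff_left)
    ultimately show ?thesis using row[of j] a c unfolding eps_def rkhs_eval_def
      by (simp add: algebra_simps) (metis add.commute add_diff_cancel distrib_left)
  qed
  have DQ: "inner D Qhat = (\<Sum>j\<in>UNIV. b $ j * e0 j)"
    unfolding Qh e0_def rkhs_eval_def by (simp add: inner_sum_right)
  have "(\<Sum>i\<in>UNIV. (e0 i)\<^sup>2 - gam * e0 i * e1 i)
      = (\<Sum>i\<in>UNIV. eps i * e0 i + e0 i * (e0 i - gam * e1 i - eps i))"
    by (rule sum.cong) (auto simp: algebra_simps power2_eq_square)
  also have "\<dots> = (\<Sum>i\<in>UNIV. eps i * e0 i) - lam * n * (\<Sum>i\<in>UNIV. b $ i * e0 i)"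
    (is "?L = _")
  proof -
    have "?L = (\<Sum>i\<in>UNIV. eps i * e0 i + (- (lam * n)) * (b $ i * e0 i))"
      by (rule sum.cong) (simp_all only: key mult_ac)
    also have "\<dots> = (\<Sum>i\<in>UNIV. eps i * e0 i) + (- (lam * n)) * (\<Sum>i\<in>UNIV. b $ i * e0 i)"
      by (simp only: sum.distrib sum_distrib_left)
    finally show ?thesis by simp
  qed
  finally have "(\<Sum>i\<in>UNIV. (e0 i)\<^sup>2 - gam * e0 i * e1 i)
      = (\<Sum>i\<in>UNIV. eps i * e0 i) - lam * n * inner D Qhat" using DQ by simp
  hence "(1/n) * (\<Sum>i\<in>UNIV. (e0 i)\<^sup>2 - gam * e0 i * e1 i)
      = (1/n) * (\<Sum>i\<in>UNIV. eps i * e0 i) - lam * inner D Qhat"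
    using npos by (simp add: field_simps)
  thus ?thesis unfolding e0_def e1_def n_def .
qed

end
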